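(* Let $p$ be a prime and $G$ an extraspecial $p$-group. Then the only subsets of $G$ of the form $w(G)$ with $d\ge1$ and $w\in F_d$ are $\{1\}$, $Z(G)$ and $G$.
   Context: A special $p$-group is a finite $p$-group whose center, derived subgroup and Frattini subgroup coincide and are elementary abelian; it is extraspecial if $|Z(G)|=p$. $F_d$ is the free group on $d$ letters and $w(G)$ is the image of the word map $G^d\to G$ given by evaluating $w$. *)

theory Defs
  imports "HOL-Algebra.Algebra"
begin

definition group_center :: "('a, 'b) monoid_scheme \<Rightarrow> 'a set" where
  "group_center G = {z \<in> carrier G. \<forall>g \<in> carrier G. z \<otimes>\<^bsub>G\<^esub> g = g \<otimes>\<^bsub>G\<^esub> z}"

definition maximal_subgroup :: "('a, 'b) monoid_scheme \<Rightarrow> 'a set \<Rightarrow> bool" where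
  "maximal_subgroup G M \<longleftrightarrow> subgroup M G \<and> M \<noteq> carrier G \<and>
     (\<forall>H. subgroup H G \<and> M \<subseteq> H \<longrightarrow> H = M \<or> H = carrier G)"

definition frattini :: "('a, 'b) monoid_scheme \<Rightarrow> 'a set" where
  "frattini G = {x \<in> carrier G. \<forall>M. maximal_subgroup G M \<longrightarrow> x \<in> M}"

definition p_group :: "nat \<Rightarrow> ('a, 'b) monoid_scheme \<Rightarrow> bool" where
  "p_group p G \<longleftrightarrow> finite (carrier G) \<and> (\<exists>n. order G = p ^ n)"

definition elementary_abelian :: "nat \<Rightarrow> ('a, 'b) monoid_scheme \<Rightarrow> 'a set \<Rightarrow> bool" where
  "elementary_abelian p G H \<longleftrightarrow> subgroup H G \<and>
     (\<forall>x \<in> H. \<forall>y \<in> H. x \<otimes>\<^bsub>G\<^esub> y = y \<otimes>\<^bsub>G\<^esub> x) \<and>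
     (\<forall>x \<in> H. x [^]\<^bsub>G\<^esub> p = \<one>\<^bsub>G\<^esub>)"

definition special_p_group :: "nat \<Rightarrow> ('a, 'b) monoid_scheme \<Rightarrow> bool" where
  "special_p_group p G \<longleftrightarrow> p_group p G \<and>
     group_center G = derived G (carrier G) \<and>
     derived G (carrier G) = frattini G \<and>
     elementary_abelian p G (group_center G)"

definition extraspecial_p_group :: "nat \<Rightarrow> ('a, 'b) monoid_scheme \<Rightarrow> bool" where
  "extraspecial_p_group p G \<longleftrightarrow> special_p_group p G \<and> card (group_center G) = p"

text \<open>Elements of the free group F_d are represented by (not necessarily reduced) words
  in the letters x_0,...,x_{d-1} and their inverses: a pair (i, True) is x_i, (i, False) is x_i^{-1}.\<close>
type_synonym word = "(nat \<times> bool) list"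

definition free_words :: "nat \<Rightarrow> word set" where
  "free_words d = {w. \<forall>(i, b) \<in> set w. i < d}"

fun word_eval :: "('a, 'b) monoid_scheme \<Rightarrow> (nat \<Rightarrow> 'a) \<Rightarrow> word \<Rightarrow> 'a" where
  "word_eval G g [] = \<one>\<^bsub>G\<^esub>"
| "word_eval G g ((i, b) # w) =
     (if b then g i else inv\<^bsub>G\<^esub> (g i)) \<otimes>\<^bsub>G\<^esub> word_eval G g w"

definition word_image :: "('a, 'b) monoid_scheme \<Rightarrow> nat \<Rightarrow> word \<Rightarrow> 'a set" where
  "word_image G d w = {word_eval G g w | g. g \<in> {..<d} \<rightarrow>\<^sub>E carrier G}"

end

theory Submission
  imports Defs
begin


fun esum :: "nat \<Rightarrow> word \<Rightarrow> int" where
  "esum i [] = 0"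
| "esum i ((j, b) # w) = (if j = i then (if b then 1 else -1) else 0) + esum i w"

definition comm :: "('a, 'b) monoid_scheme \<Rightarrow> 'a \<Rightarrow> 'a \<Rightarrow> 'a" where
  "comm G a b = inv\<^bsub>G\<^esub> a \<otimes>\<^bsub>G\<^esub> inv\<^bsub>G\<^esub> b \<otimes>\<^bsub>G\<^esub> a \<otimes>\<^bsub>G\<^esub> b"

context group begin

lemma word_eval_closed:
  "(\<And>j. g j \<in> carrier G) \<Longrightarrow> word_eval G g w \<in> carrier G"
  by (induction w) auto

lemma word_eval_cong:
  "(\<And>j b. (j, b) \<in> set w \<Longrightarrow> g j = g' j) \<Longrightarrow> word_eval G g w = word_eval G g' w"
  by (induction w) (auto, (metis)+)

lemma word_eval_one: "word_eval G (\<lambda>_. \<one>) w = \<one>"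
  by (induction w) auto

lemma word_eval_single:
  assumes x: "x \<in> carrier G"
  shows "word_eval G (\<lambda>j. if j = i then x else \<one>) w = x [^] esum i w"
proof (induction w)
  case Nil then show ?case by simp
next
  case (Cons a w)
  obtain j b where a: "a = (j, b)" by fastforce
  show ?case
  proof (cases "j = i")
    case True
    show ?thesis
    proof (cases b)
      case True
      have "x [^] (1 + esum i w) = x [^] (1::int) \<otimes> x [^] esum i w" using int_pow_mult x by blast
      then show ?thesis using Cons a \<open>j = i\<close> True x by simp
    next
      case False
      have "x [^] (-1 + esum i w) = x [^] (-1::int) \<otimes> x [^] esum i w" using int_pow_mult x by blast
      moreover have "x [^] (-1::int) = inv x" using int_pow_neg[OF x, of 1] x by simp
      ultimately show ?thesis using Cons a \<open>j = i\<close> False x by simp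
    qed
  next
    case False
    then show ?thesis using Cons a x by simp
  qed
qed

lemma power_root:
  assumes "Factorial_Ring.prime p" "order G = p ^ n" "\<not> int p dvd e"
  shows "\<exists>s. \<forall>y \<in> carrier G. y [^] (e * s) = y"
proof -
  have pi: "Factorial_Ring.prime (int p)" using assms(1) by simp
  have "coprime (int p) e" using prime_imp_coprime[OF pi assms(3)] .
  then have "coprime e (int p)" by (simp add: coprime_commute)
  then have "coprime e (int p ^ n)" by simp
  then obtain s t where st: "s * e + t * (int p ^ n) = 1"
    by (metis bezout_int coprime_iff_gcd_eq_1)
  show ?thesis
  proof (intro exI ballI)
    fix y assume y: "y \<in> carrier G"
    have o: "y [^] (int p ^ n) = \<one>"
      using pow_order_eq_1[OF y] assms(2) int_pow_int by (metis of_nat_power)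
    have "y = y [^] (s * e + t * (int p ^ n))" using st y by simp
    also have "\<dots> = y [^] (e * s) \<otimes> y [^] (t * (int p ^ n))" using int_pow_mult y by (simp add: mult.commute)
    also have "y [^] (t * (int p ^ n)) = \<one>" using int_pow_pow[OF y, of "int p ^ n" t] o
      by (simp add: mult.commute)
    finally show "y [^] (e * s) = y" using y by simp
  qed
qed


lemma r_inv_assoc [simp]: "x \<in> carrier G \<Longrightarrow> y \<in> carrier G \<Longrightarrow> x \<otimes> (inv x \<otimes> y) = y"
  by (simp add: m_assoc[symmetric])
lemma l_inv_assoc [simp]: "x \<in> carrier G \<Longrightarrow> y \<in> carrier G \<Longrightarrow> inv x \<otimes> (x \<otimes> y) = y"
  by (simp add: m_assoc[symmetric])

lemma comm_closed [simp]: "a \<in> carrier G \<Longrightarrow> b \<in> carrier G \<Longrightarrow> comm G a b \<in> carrier G"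
  by (simp add: comm_def)

lemma comm_swap: "a \<in> carrier G \<Longrightarrow> b \<in> carrier G \<Longrightarrow> a \<otimes> b = b \<otimes> a \<otimes> comm G a b"
  by (simp add: comm_def m_assoc)

lemma comm_anti: "a \<in> carrier G \<Longrightarrow> b \<in> carrier G \<Longrightarrow> inv (comm G a b) = comm G b a"
  by (simp add: comm_def m_assoc inv_mult_group)

lemma comm_one_left [simp]: "a \<in> carrier G \<Longrightarrow> comm G \<one> a = \<one>"
  by (simp add: comm_def)
lemma comm_one_right [simp]: "a \<in> carrier G \<Longrightarrow> comm G a \<one> = \<one>"
  by (simp add: comm_def m_assoc)

end

locale class2 = group +
  assumes central: "\<lbrakk>a \<in> carrier G; b \<in> carrier G; c \<in> carrier G\<rbrakk> \<Longrightarrow> comm G a b \<otimes> c = c \<otimes> comm G a b"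
begin

lemma comm_right_mult:
  assumes x: "x \<in> carrier G" and a: "a \<in> carrier G" and b: "b \<in> carrier G"
  shows "comm G x (a \<otimes> b) = comm G x a \<otimes> comm G x b"
proof -
  have 1: "inv a \<otimes> x \<otimes> a = x \<otimes> comm G x a" using x a by (simp add: comm_def m_assoc)
  have "comm G x (a \<otimes> b) = inv x \<otimes> inv b \<otimes> (inv a \<otimes> x \<otimes> a) \<otimes> b"
    using x a b by (simp add: comm_def m_assoc inv_mult_group)
  also have "\<dots> = inv x \<otimes> inv b \<otimes> x \<otimes> (comm G x a \<otimes> b)" using 1 x a b by (simp add: m_assoc)
  also have "\<dots> = inv x \<otimes> inv b \<otimes> x \<otimes> (b \<otimes> comm G x a)" using central[of x a b] x a b by simp
  also have "\<dots> = comm G x b \<otimes> comm G x a" using x a b by (simp add: comm_def m_assoc)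
  also have "\<dots> = comm G x a \<otimes> comm G x b" using central[of x a "comm G x b"] x a b by simp
  finally show ?thesis .
qed

lemma comm_left_mult:
  assumes a: "a \<in> carrier G" and b: "b \<in> carrier G" and y: "y \<in> carrier G"
  shows "comm G (a \<otimes> b) y = comm G a y \<otimes> comm G b y"
proof -
  have "comm G (a \<otimes> b) y = inv (comm G y (a \<otimes> b))" using comm_anti a b y by simp
  also have "\<dots> = inv (comm G y a \<otimes> comm G y b)" using comm_right_mult a b y by simp
  also have "\<dots> = inv (comm G y b) \<otimes> inv (comm G y a)" using a b y by (simp add: inv_mult_group)
  also have "\<dots> = comm G b y \<otimes> comm G a y" using comm_anti a b y by simp
  also have "\<dots> = comm G a y \<otimes> comm G b y" using central[of b y "comm G a y"] a b y by simp
  finally show ?thesis .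
qed

lemma comm_inv_left:
  assumes x: "x \<in> carrier G" and y: "y \<in> carrier G"
  shows "comm G (inv x) y = inv (comm G x y)"
proof -
  have "comm G (inv x) y \<otimes> comm G x y = \<one>" using comm_left_mult[of "inv x" x y] x y by simp
  then show ?thesis using x y by (simp add: inv_equality)
qed

lemma comm_inv_right:
  assumes x: "x \<in> carrier G" and y: "y \<in> carrier G"
  shows "comm G x (inv y) = inv (comm G x y)"
proof -
  have "comm G x (inv y) \<otimes> comm G x y = \<one>" using comm_right_mult[of x "inv y" y] x y by simp
  then show ?thesis using x y by (simp add: inv_equality)
qed

lemma comm_pow_nat:
  assumes x: "x \<in> carrier G" and y: "y \<in> carrier G"
  shows "comm G (x [^] (n::nat)) y = comm G x y [^] n"
proof (induction n)
  case 0 then show ?case using y by simp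
next
  case (Suc n)
  then show ?case using x y comm_left_mult[of "x [^] n" x y] by simp
qed

lemma comm_pow_int:
  assumes x: "x \<in> carrier G" and y: "y \<in> carrier G"
  shows "comm G (x [^] (k::int)) y = comm G x y [^] k"
proof (cases "k \<ge> 0")
  case True
  then obtain n where "k = int n" by (metis nonneg_eq_int)
  then show ?thesis using comm_pow_nat x y by (simp add: int_pow_int)
next
  case False
  then obtain n where "k = - int n" by (metis neg_0_le_iff_le nonneg_eq_int nle_le minus_minus)
  then show ?thesis using comm_pow_nat[OF x y, of n] comm_inv_left x y
    by (simp add: int_pow_neg_int)
qed


lemma word_eval_affine:
  assumes h: "\<And>j. h j \<in> carrier G"
  shows "\<exists>U T. U \<in> carrier G \<and> T \<in> carrier G \<and>
     (\<forall>x\<in>carrier G. word_eval G (h(i:=x)) w = U \<otimes> x [^] esum i w \<otimes> comm G x T)"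
proof (induction w)
  case Nil
  show ?case by (rule exI[of _ \<one>], rule exI[of _ \<one>]) simp
next
  case (Cons a w)
  obtain U T where U: "U \<in> carrier G" and T: "T \<in> carrier G"
    and IH: "\<And>x. x \<in> carrier G \<Longrightarrow> word_eval G (h(i:=x)) w = U \<otimes> x [^] esum i w \<otimes> comm G x T"
    using Cons by blast
  obtain j b where a: "a = (j, b)" by fastforce
  show ?case
  proof (cases "j = i")
    case False
    define u where "u = (if b then h j else inv (h j))"
    have u: "u \<in> carrier G" using h by (simp add: u_def)
    show ?thesis
    proof (intro exI conjI ballI)
      show "u \<otimes> U \<in> carrier G" using u U by simp
      show "T \<in> carrier G" by (rule T)
      fix x assume x: "x \<in> carrier G"
      have "word_eval G (h(i:=x)) (a # w) = u \<otimes> word_eval G (h(i:=x)) w"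
        using a False by (simp add: u_def)
      also have "\<dots> = u \<otimes> U \<otimes> x [^] esum i (a # w) \<otimes> comm G x T"
        using IH[OF x] a False u U T x by (simp add: m_assoc)
      finally show "word_eval G (h(i:=x)) (a # w) = u \<otimes> U \<otimes> x [^] esum i (a # w) \<otimes> comm G x T" .
    qed
  next
    case True
    show ?thesis
    proof (cases b)
      case True
      show ?thesis
      proof (intro exI conjI ballI)
        show "U \<in> carrier G" by (rule U)
        show "U \<otimes> T \<in> carrier G" using U T by simp
        fix x assume x: "x \<in> carrier G"
        let ?S = "esum i w"
        have e: "esum i (a # w) = 1 + ?S" using a \<open>j = i\<close> True by simp
        have "word_eval G (h(i:=x)) (a # w) = x \<otimes> (U \<otimes> x [^] ?S \<otimes> comm G x T)"
          using a \<open>j = i\<close> True IH[OF x] by simp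
        also have "\<dots> = (x \<otimes> U) \<otimes> x [^] ?S \<otimes> comm G x T" using x U T by (simp add: m_assoc)
        also have "\<dots> = U \<otimes> x \<otimes> comm G x U \<otimes> x [^] ?S \<otimes> comm G x T" using comm_swap[OF x U] by simp
        also have "\<dots> = U \<otimes> x \<otimes> (comm G x U \<otimes> x [^] ?S) \<otimes> comm G x T" using x U T by (simp add: m_assoc)
        also have "\<dots> = U \<otimes> x \<otimes> (x [^] ?S \<otimes> comm G x U) \<otimes> comm G x T"
          using central[of x U "x [^] ?S"] x U by simp
        also have "\<dots> = U \<otimes> (x \<otimes> x [^] ?S) \<otimes> (comm G x U \<otimes> comm G x T)" using x U T by (simp add: m_assoc)
        also have "x \<otimes> x [^] ?S = x [^] (1 + ?S)" using int_pow_mult[OF x, of 1 ?S] x by simp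
        also have "comm G x U \<otimes> comm G x T = comm G x (U \<otimes> T)" using comm_right_mult x U T by simp
        finally show "word_eval G (h(i:=x)) (a # w) = U \<otimes> x [^] esum i (a # w) \<otimes> comm G x (U \<otimes> T)"
          using e by (simp add: fun_upd_def)
      qed
    next
      case False
      show ?thesis
      proof (intro exI conjI ballI)
        show "U \<in> carrier G" by (rule U)
        show "inv U \<otimes> T \<in> carrier G" using U T by simp
        fix x assume x: "x \<in> carrier G"
        let ?S = "esum i w"
        have ix: "inv x \<in> carrier G" using x by simp
        have e: "esum i (a # w) = -1 + ?S" using a \<open>j = i\<close> False by simp
        have "word_eval G (h(i:=x)) (a # w) = inv x \<otimes> (U \<otimes> x [^] ?S \<otimes> comm G x T)"
          using a \<open>j = i\<close> False IH[OF x] by simp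
        also have "\<dots> = (inv x \<otimes> U) \<otimes> x [^] ?S \<otimes> comm G x T" using x U T by (simp add: m_assoc)
        also have "\<dots> = U \<otimes> inv x \<otimes> comm G (inv x) U \<otimes> x [^] ?S \<otimes> comm G x T" using comm_swap[OF ix U] by simp
        also have "comm G (inv x) U = comm G x (inv U)" using comm_inv_left comm_inv_right x U by simp
        also have "U \<otimes> inv x \<otimes> comm G x (inv U) \<otimes> x [^] ?S \<otimes> comm G x T
            = U \<otimes> inv x \<otimes> (comm G x (inv U) \<otimes> x [^] ?S) \<otimes> comm G x T" using x U T by (simp add: m_assoc)
        also have "\<dots> = U \<otimes> inv x \<otimes> (x [^] ?S \<otimes> comm G x (inv U)) \<otimes> comm G x T"
          using central[of x "inv U" "x [^] ?S"] x U by simp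
        also have "\<dots> = U \<otimes> (inv x \<otimes> x [^] ?S) \<otimes> (comm G x (inv U) \<otimes> comm G x T)" using x U T by (simp add: m_assoc)
        also have "inv x \<otimes> x [^] ?S = x [^] (-1 + ?S)"
          using int_pow_mult[OF x, of "-1" ?S] int_pow_neg[OF x, of 1] x by simp
        also have "comm G x (inv U) \<otimes> comm G x T = comm G x (inv U \<otimes> T)" using comm_right_mult x U T by simp
        finally show "word_eval G (h(i:=x)) (a # w) = U \<otimes> x [^] esum i (a # w) \<otimes> comm G x (inv U \<otimes> T)"
          using e by (simp add: fun_upd_def)
      qed
    qed
  qed
qed

end


context group begin

lemma derived_set_mem:
  assumes "h1 \<in> H" "h2 \<in> H"
  shows "h1 \<otimes> h2 \<otimes> inv h1 \<otimes> inv h2 \<in> derived_set G H"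
  using assms by (intro UN_I[of h1] UN_I[of h2]) (simp_all)

lemma comm_in_derived:
  assumes a: "a \<in> carrier G" and b: "b \<in> carrier G"
  shows "comm G a b \<in> derived G (carrier G)"
proof -
  have "comm G a b = inv a \<otimes> inv b \<otimes> inv (inv a) \<otimes> inv (inv b)" using a b by (simp add: comm_def)
  then have "comm G a b \<in> derived_set G (carrier G)" using a b
    using derived_set_mem[of "inv a" "carrier G" "inv b"] a b by simp
  then show ?thesis unfolding derived_def by (rule generate.incl)
qed

lemma frattini_pow:
  assumes der: "derived G (carrier G) \<subseteq> M" and max: "maximal_subgroup G M"
    and ord: "order G = p ^ n" and pr: "Factorial_Ring.prime p" and x: "x \<in> carrier G"
  shows "x [^] p \<in> M"
proof -
  have M: "subgroup M G" using max by (simp add: maximal_subgroup_def)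
  have Mc: "M \<subseteq> carrier G" using M subgroup.subset by blast
  have conj: "g \<otimes> m \<otimes> inv g \<in> M" if g: "g \<in> carrier G" and m: "m \<in> M" for g m
  proof -
    have mc: "m \<in> carrier G" using m Mc by blast
    have "g \<otimes> m \<otimes> inv g \<otimes> inv m \<in> derived_set G (carrier G)" 
      by (rule derived_set_mem[OF g mc])
    then have "g \<otimes> m \<otimes> inv g \<otimes> inv m \<in> derived G (carrier G)" unfolding derived_def
      by (rule generate.incl)
    then have "g \<otimes> m \<otimes> inv g \<otimes> inv m \<in> M" using der by blast
    then have "g \<otimes> m \<otimes> inv g \<otimes> inv m \<otimes> m \<in> M" using subgroup.m_closed[OF M _ m] by blast
    then show ?thesis using g mc by (simp add: m_assoc)
  qed
  define h where "h = x [^] p"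
  have hc: "h \<in> carrier G" using x by (simp add: h_def)
  define H where "H = {m \<otimes> h [^] (k::int) | m k. m \<in> M}"
  have HG: "subgroup H G"
  proof (rule subgroupI)
    show "H \<subseteq> carrier G" using Mc hc by (auto simp: H_def)
    show "H \<noteq> {}" using subgroup.one_closed[OF M] by (auto simp: H_def)
  next
    fix a assume "a \<in> H"
    then obtain m k where m: "m \<in> M" and a: "a = m \<otimes> h [^] (k::int)" by (auto simp: H_def)
    have mc: "m \<in> carrier G" using m Mc by blast
    have "inv a = (h [^] (-k) \<otimes> inv m \<otimes> inv (h [^] (-k))) \<otimes> h [^] (-k)"
      using a mc hc by (simp add: inv_mult_group int_pow_neg m_assoc)
    moreover have "h [^] (-k) \<otimes> inv m \<otimes> inv (h [^] (-k)) \<in> M"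
      using conj[of "h [^] (-k)" "inv m"] hc m subgroup.m_inv_closed[OF M] by simp
    ultimately show "inv a \<in> H" by (auto simp: H_def)
  next
    fix a b assume "a \<in> H" "b \<in> H"
    then obtain m1 k1 m2 k2 where m1: "m1 \<in> M" and a: "a = m1 \<otimes> h [^] (k1::int)"
      and m2: "m2 \<in> M" and b: "b = m2 \<otimes> h [^] (k2::int)" by (auto simp: H_def)
    have m1c: "m1 \<in> carrier G" and m2c: "m2 \<in> carrier G" using m1 m2 Mc by auto
    have "a \<otimes> b = (m1 \<otimes> (h [^] k1 \<otimes> m2 \<otimes> inv (h [^] k1))) \<otimes> h [^] (k1 + k2)"
      using a b m1c m2c hc by (simp add: int_pow_mult m_assoc)
    moreover have "m1 \<otimes> (h [^] k1 \<otimes> m2 \<otimes> inv (h [^] k1)) \<in> M"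
      using conj[of "h [^] k1" m2] hc m1 m2 subgroup.m_closed[OF M] by simp
    ultimately show "a \<otimes> b \<in> H" by (auto simp: H_def)
  qed
  have MH: "M \<subseteq> H"
  proof
    fix m assume "m \<in> M"
    have "m \<otimes> h [^] (0::int) \<in> H" unfolding H_def using \<open>m \<in> M\<close> by blast
    then show "m \<in> H" using \<open>m \<in> M\<close> Mc by auto
  qed
  have "H = M \<or> H = carrier G" using max HG MH by (simp add: maximal_subgroup_def)
  then show ?thesis
  proof
    assume "H = M"
    have "h = \<one> \<otimes> h [^] (1::int)" using hc by simp
    then have "h \<in> H" using subgroup.one_closed[OF M] by (auto simp: H_def)
    then show ?thesis using \<open>H = M\<close> h_def by simp
  next
    assume "H = carrier G"
    then have "x \<in> H" using x by simp
    then obtain m k where m: "m \<in> M" and xe: "x = m \<otimes> h [^] (k::int)" by (auto simp: H_def)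
    have mc: "m \<in> carrier G" using m Mc by blast
    have hk: "h [^] k = x [^] (int p * k)" using int_pow_pow[OF x] by (simp add: h_def int_pow_int[symmetric])
    have "m = x \<otimes> inv (h [^] k)" using xe mc hc by (simp add: m_assoc)
    also have "\<dots> = x [^] (1 - int p * k)" using hk x by (simp add: int_pow_diff)
    finally have me: "m = x [^] (1 - int p * k)" .
    have nd: "\<not> int p dvd (1 - int p * k)"
    proof
      assume "int p dvd (1 - int p * k)"
      moreover have "int p dvd int p * k" by simp
      ultimately have "int p dvd (1 - int p * k) + int p * k" by (rule dvd_add)
      then have "int p dvd 1" by simp
      then show False using pr by (simp add: prime_nat_iff)
    qed
    obtain s where s: "\<forall>y\<in>carrier G. y [^] ((1 - int p * k) * s) = y"
      using power_root[OF pr ord nd] by blast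
    have "x = m [^] s" using s x me int_pow_pow[OF x] by simp
    then have "x \<in> M" using subgroup_int_pow_closed[OF M m] by simp
    then have "x [^] (int p) \<in> M" using subgroup_int_pow_closed[OF M] by blast
    then show ?thesis by (simp add: int_pow_int)
  qed
qed

lemma prime_subgroup_gen:
  assumes Z: "subgroup Z G" and c: "card Z = p" and pr: "Factorial_Ring.prime p"
    and a: "a \<in> Z" and a1: "a \<noteq> \<one>"
  shows "Z \<subseteq> {a [^] (k::int) | k. True}"
proof -
  have ac: "a \<in> carrier G" using a Z subgroup.subset by blast
  let ?H = "generate G {a}"
  have HZ: "?H \<subseteq> Z" using generate_subgroup_incl[OF _ Z] a by simp
  have HG: "subgroup ?H G" using generate_is_subgroup ac by simp
  have "subgroup ?H (G\<lparr>carrier := Z\<rparr>)" using subgroup_incl[OF HG Z HZ] .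
  moreover have gz: "group (G\<lparr>carrier := Z\<rparr>)" using subgroup_imp_group[OF Z] .
  ultimately have "card (rcosets\<^bsub>G\<lparr>carrier := Z\<rparr>\<^esub> ?H) * card ?H = order (G\<lparr>carrier := Z\<rparr>)"
    using group.lagrange[OF gz] by simp
  then have "card (rcosets\<^bsub>G\<lparr>carrier := Z\<rparr>\<^esub> ?H) * card ?H = p" using c by (simp add: order_def)
  then have dv: "card ?H dvd p" using dvd_triv_right[of "card ?H" "card (rcosets\<^bsub>G\<lparr>carrier := Z\<rparr>\<^esub> ?H)"] by simp
  have fZ: "finite Z"
  proof (rule ccontr)
    assume "infinite Z" then have "card Z = 0" by simp
    with c pr show False by simp
  qed
  have fH: "finite ?H" using HZ fZ finite_subset by blast
  have "{\<one>, a} \<subseteq> ?H" using generate.one generate.incl[of a "{a}"] by auto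
  then have "card {\<one>, a} \<le> card ?H" using fH card_mono by blast
  then have "2 \<le> card ?H" using a1 by simp
  moreover have "card ?H = 1 \<or> card ?H = p" using dv pr by (simp add: prime_nat_iff)
  ultimately have "card ?H = p" by auto
  then have "?H = Z" using card_subset_eq[OF fZ HZ] c by simp
  then show ?thesis using generate_pow[OF ac] by blast
qed

end


locale xgrp = group +
  fixes p :: nat and Z :: "'a set" and n :: nat
  assumes pr: "Factorial_Ring.prime p"
    and Zsub: "subgroup Z G"
    and Zcent: "\<lbrakk>z \<in> Z; g \<in> carrier G\<rbrakk> \<Longrightarrow> z \<otimes> g = g \<otimes> z"
    and cardZ: "card Z = p"
    and comm_in: "\<lbrakk>a \<in> carrier G; b \<in> carrier G\<rbrakk> \<Longrightarrow> comm G a b \<in> Z"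
    and pow_in: "x \<in> carrier G \<Longrightarrow> x [^] p \<in> Z"
    and ordG: "order G = p ^ n"

sublocale xgrp \<subseteq> class2
proof
  fix a b c assume "a \<in> carrier G" "b \<in> carrier G" "c \<in> carrier G"
  then show "comm G a b \<otimes> c = c \<otimes> comm G a b" using comm_in Zcent by blast
qed

context xgrp begin

lemma Zc: "Z \<subseteq> carrier G" using Zsub subgroup.subset by blast

lemma Zmem: "z \<in> Z \<Longrightarrow> z \<in> carrier G" using Zc by blast

lemma local_induct:
  assumes base: "R (word_eval G (\<lambda>_. \<one>) w)"
    and step: "\<And>g m. (\<forall>j. g j \<in> carrier G) \<Longrightarrow> R (word_eval G (g(m:=\<one>)) w) \<Longrightarrow> R (word_eval G g w)"
  shows "(\<forall>j. g j \<in> carrier G) \<Longrightarrow> (\<forall>j\<ge>m. g j = \<one>) \<Longrightarrow> R (word_eval G g w)"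
proof (induction m arbitrary: g)
  case 0
  then have "g = (\<lambda>_. \<one>)" by auto
  then show ?case using base by simp
next
  case (Suc m)
  have p1: "\<forall>j. (g(m:=\<one>)) j \<in> carrier G" using Suc.prems by simp
  have p2: "\<forall>j\<ge>m. (g(m:=\<one>)) j = \<one>" using Suc.prems by (auto simp: Suc_le_eq)
  have "R (word_eval G (g(m:=\<one>)) w)" using Suc.IH[OF p1 p2] .
  then show ?case using step Suc.prems by blast
qed

lemma local_all:
  assumes base: "R (word_eval G (\<lambda>_. \<one>) w)"
    and step: "\<And>g m. (\<forall>j. g j \<in> carrier G) \<Longrightarrow> R (word_eval G (g(m:=\<one>)) w) \<Longrightarrow> R (word_eval G g w)"
    and g: "\<forall>j. g j \<in> carrier G"
  shows "R (word_eval G g w)"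
proof -
  define B where "B = Suc (Max (insert 0 (fst ` set w)))"
  define g' where "g' = (\<lambda>j. if j < B then g j else \<one>)"
  have "R (word_eval G g' w)"
    by (rule local_induct[where R=R and w=w and g=g' and m=B, OF base step]) (use g in \<open>auto simp: g'_def\<close>)
  moreover have "word_eval G g' w = word_eval G g w"
  proof (rule word_eval_cong)
    fix j b assume "(j, b) \<in> set w"
    then have "j \<in> insert 0 (fst ` set w)" by force
    then have "j \<le> Max (insert 0 (fst ` set w))" by simp
    then show "g' j = g j" by (simp add: g'_def B_def)
  qed
  ultimately show ?thesis by simp
qed

lemma pow_mult_p_in:
  assumes x: "x \<in> carrier G" and dv: "int p dvd S"
  shows "x [^] S \<in> Z"
proof -
  obtain k where S: "S = int p * k" using dv by blast
  have "x [^] S = (x [^] (int p)) [^] k" using int_pow_pow[OF x] S by simp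
  also have "\<dots> = (x [^] p) [^] k" by (simp add: int_pow_int)
  finally show ?thesis using subgroup_int_pow_closed[OF Zsub pow_in[OF x]] by simp
qed

lemma affine_at_one:
  assumes g: "\<forall>j. g j \<in> carrier G" and U: "U \<in> carrier G" and T: "T \<in> carrier G"
    and aff: "\<forall>x\<in>carrier G. word_eval G (g(m:=x)) w = U \<otimes> x [^] esum m w \<otimes> comm G x T"
  shows "word_eval G (g(m:=\<one>)) w = U" "word_eval G g w = U \<otimes> g m [^] esum m w \<otimes> comm G (g m) T"
proof -
  show "word_eval G (g(m:=\<one>)) w = U" using aff U T by simp
  have "g(m := g m) = g" by simp
  then show "word_eval G g w = U \<otimes> g m [^] esum m w \<otimes> comm G (g m) T" using aff g by metis
qed

lemma in_Z:
  assumes dv: "\<forall>i. int p dvd esum i w" and g: "\<forall>j. g j \<in> carrier G"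
  shows "word_eval G g w \<in> Z"
proof (rule local_all[OF _ _ g])
  show "word_eval G (\<lambda>_. \<one>) w \<in> Z" using word_eval_one subgroup.one_closed[OF Zsub] by simp
next
  fix g m assume g: "\<forall>j. g j \<in> carrier G" and IH: "word_eval G (g(m:=\<one>)) w \<in> Z"
  obtain U T where U: "U \<in> carrier G" and T: "T \<in> carrier G"
    and aff: "\<forall>x\<in>carrier G. word_eval G (g(m:=x)) w = U \<otimes> x [^] esum m w \<otimes> comm G x T"
    using word_eval_affine[of g m w] g by blast
  note e = affine_at_one[OF g U T aff]
  have "U \<in> Z" using IH e(1) by simp
  moreover have "g m [^] esum m w \<in> Z" using pow_mult_p_in g dv by blast
  moreover have "comm G (g m) T \<in> Z" using comm_in g T by blast
  ultimately show "word_eval G g w \<in> Z" using e(2) subgroup.m_closed[OF Zsub] by simp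
qed

lemma jump:
  assumes dv: "\<forall>i. int p dvd esum i w" and g: "\<forall>j. g j \<in> carrier G"
    and ne: "word_eval G g w \<noteq> word_eval G (g(m:=\<one>)) w"
  shows "Z \<subseteq> {word_eval G g' w | g'. \<forall>j. g' j \<in> carrier G}"
proof
  fix z assume z: "z \<in> Z"
  obtain U T where U: "U \<in> carrier G" and T: "T \<in> carrier G"
    and aff: "\<forall>x\<in>carrier G. word_eval G (g(m:=x)) w = U \<otimes> x [^] esum m w \<otimes> comm G x T"
    using word_eval_affine[of g m w] g by blast
  note e = affine_at_one[OF g U T aff]
  let ?S = "esum m w"
  define x0 where "x0 = g m"
  have x0: "x0 \<in> carrier G" using g by (simp add: x0_def)
  define b where "b = x0 [^] ?S"
  define c where "c = comm G x0 T"
  have bZ: "b \<in> Z" using pow_mult_p_in x0 dv by (simp add: b_def)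
  have cZ: "c \<in> Z" using comm_in x0 T by (simp add: c_def)
  have UZ: "U \<in> Z" using in_Z[OF dv, of "g(m:=\<one>)"] g e(1) by simp
  define a where "a = b \<otimes> c"
  have aZ: "a \<in> Z" using bZ cZ subgroup.m_closed[OF Zsub] by (simp add: a_def)
  have bc: "b \<in> carrier G" "c \<in> carrier G" using bZ cZ Zmem by auto
  have wg: "word_eval G g w = U \<otimes> a" using e(2) U bc by (simp add: a_def b_def c_def x0_def m_assoc)
  have a1: "a \<noteq> \<one>" using ne wg e(1) U by auto
  have "inv U \<otimes> z \<in> Z" using UZ z subgroup.m_closed[OF Zsub] subgroup.m_inv_closed[OF Zsub] by simp
  then obtain k where k: "inv U \<otimes> z = a [^] (k::int)"
    using prime_subgroup_gen[OF Zsub cardZ pr aZ a1] by blast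
  have xk: "x0 [^] k \<in> carrier G" using x0 by simp
  have "word_eval G (g(m:=x0 [^] k)) w = U \<otimes> (x0 [^] k) [^] ?S \<otimes> comm G (x0 [^] k) T"
    using aff xk by blast
  also have "(x0 [^] k) [^] ?S = b [^] k" using int_pow_pow[OF x0] by (simp add: b_def mult.commute)
  also have "comm G (x0 [^] k) T = c [^] k" using comm_pow_int[OF x0 T] by (simp add: c_def)
  also have "U \<otimes> b [^] k \<otimes> c [^] k = U \<otimes> (b \<otimes> c) [^] k"
    using int_pow_mult_distrib[OF Zcent[OF bZ bc(2)] bc] U bc by (simp add: m_assoc)
  also have "\<dots> = U \<otimes> (inv U \<otimes> z)" using k by (simp add: a_def[symmetric])
  also have "\<dots> = z" using U Zmem[OF z] by simp
  finally have "word_eval G (g(m:=x0 [^] k)) w = z" .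
  moreover have "\<forall>j. (g(m:=x0 [^] k)) j \<in> carrier G" using g xk by simp
  ultimately show "z \<in> {word_eval G g' w | g'. \<forall>j. g' j \<in> carrier G}" by blast
qed

lemma find_jump:
  assumes g: "\<forall>j. g j \<in> carrier G" and ne: "word_eval G g w \<noteq> \<one>"
  shows "\<exists>g' m. (\<forall>j. g' j \<in> carrier G) \<and> word_eval G g' w \<noteq> word_eval G (g'(m:=\<one>)) w"
proof (rule ccontr)
  assume H: "\<not> ?thesis"
  have "word_eval G g w = \<one>"
  proof (rule local_all[OF _ _ g])
    show "word_eval G (\<lambda>_. \<one>) w = \<one>" by (rule word_eval_one)
  next
    fix g m assume a: "\<forall>j. g j \<in> carrier G" "word_eval G (g(m:=\<one>)) w = \<one>"
    have "\<not> ((\<forall>j. g j \<in> carrier G) \<and> word_eval G g w \<noteq> word_eval G (g(m:=\<one>)) w)"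
      using H by blast
    then show "word_eval G g w = \<one>" using a by simp
  qed
  then show False using ne by simp
qed

lemma image_total:
  assumes w: "w \<in> free_words d"
  shows "word_image G d w = {word_eval G g w | g. \<forall>j. g j \<in> carrier G}"
proof
  show "word_image G d w \<subseteq> {word_eval G g w | g. \<forall>j. g j \<in> carrier G}"
  proof
    fix y assume "y \<in> word_image G d w"
    then obtain g where g: "g \<in> {..<d} \<rightarrow>\<^sub>E carrier G" and y: "y = word_eval G g w"
      by (auto simp: word_image_def)
    define g' where "g' = (\<lambda>j. if j < d then g j else \<one>)"
    have "word_eval G g' w = word_eval G g w"
    proof (rule word_eval_cong)
      fix j b assume "(j, b) \<in> set w"
      then have "j < d" using w by (auto simp: free_words_def)
      then show "g' j = g j" by (simp add: g'_def)
    qed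
    moreover have "\<forall>j. g' j \<in> carrier G" using g by (simp add: g'_def PiE_iff)
    then have "word_eval G g' w \<in> {word_eval G g w | g. \<forall>j. g j \<in> carrier G}"
      by blast
    ultimately show "y \<in> {word_eval G g w | g. \<forall>j. g j \<in> carrier G}" using y by simp
  qed
next
  show "{word_eval G g w | g. \<forall>j. g j \<in> carrier G} \<subseteq> word_image G d w"
  proof
    fix y assume "y \<in> {word_eval G g w | g. \<forall>j. g j \<in> carrier G}"
    then obtain g where g: "\<forall>j. g j \<in> carrier G" and y: "y = word_eval G g w" by blast
    define g' where "g' = restrict g {..<d}"
    have "word_eval G g' w = word_eval G g w"
    proof (rule word_eval_cong)
      fix j b assume "(j, b) \<in> set w"
      then have "j < d" using w by (auto simp: free_words_def)
      then show "g' j = g j" by (simp add: g'_def)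
    qed
    moreover have "g' \<in> {..<d} \<rightarrow>\<^sub>E carrier G" using g by (simp add: g'_def restrict_PiE_iff)
    then have "word_eval G g' w \<in> word_image G d w" unfolding word_image_def
      by blast
    ultimately show "y \<in> word_image G d w" using y by simp
  qed
qed

lemma classify_B:
  assumes w: "w \<in> free_words d" and dv: "\<forall>i. int p dvd esum i w"
  shows "word_image G d w = {\<one>} \<or> word_image G d w = Z"
proof (cases "\<exists>g. (\<forall>j. g j \<in> carrier G) \<and> word_eval G g w \<noteq> \<one>")
  case True
  then obtain g where g: "\<forall>j. g j \<in> carrier G" "word_eval G g w \<noteq> \<one>" by blast
  obtain g' m where g': "\<forall>j. g' j \<in> carrier G" "word_eval G g' w \<noteq> word_eval G (g'(m:=\<one>)) w"
    using find_jump[OF g] by blast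
  have "Z \<subseteq> word_image G d w" unfolding image_total[OF w] by (rule jump[OF dv g'])
  moreover have "word_image G d w \<subseteq> Z" unfolding image_total[OF w] using in_Z[OF dv] by auto
  ultimately show ?thesis by auto
next
  case False
  have "word_image G d w = {\<one>}" unfolding image_total[OF w]
  proof
    show "{word_eval G g w |g. \<forall>j. g j \<in> carrier G} \<subseteq> {\<one>}" using False by auto
    have "\<forall>j. (\<lambda>_. \<one>) j \<in> carrier G" by simp
    then have "word_eval G (\<lambda>_. \<one>) w \<in> {word_eval G g w |g. \<forall>j. g j \<in> carrier G}" by auto
    then show "{\<one>} \<subseteq> {word_eval G g w |g. \<forall>j. g j \<in> carrier G}" using word_eval_one by simp
  qed
  then show ?thesis by simp
qed

lemma classify_A:
  assumes w: "w \<in> free_words d" and nd: "\<not> int p dvd esum i w"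
  shows "word_image G d w = carrier G"
  unfolding image_total[OF w]
proof
  show "{word_eval G g w |g. \<forall>j. g j \<in> carrier G} \<subseteq> carrier G" using word_eval_closed by auto
next
  show "carrier G \<subseteq> {word_eval G g w |g. \<forall>j. g j \<in> carrier G}"
  proof
    fix y assume y: "y \<in> carrier G"
    obtain s where s: "\<forall>y\<in>carrier G. y [^] (esum i w * s) = y" using power_root[OF pr ordG nd] by blast
    define x where "x = y [^] s"
    have x: "x \<in> carrier G" using y by (simp add: x_def)
    have "word_eval G (\<lambda>j. if j = i then x else \<one>) w = x [^] esum i w" by (rule word_eval_single[OF x])
    also have "\<dots> = y" using s y int_pow_pow[OF y] by (simp add: x_def mult.commute)
    finally have "word_eval G (\<lambda>j. if j = i then x else \<one>) w = y" .
    moreover have "\<forall>j. (\<lambda>j. if j = i then x else \<one>) j \<in> carrier G" using x by simp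
    ultimately show "y \<in> {word_eval G g w |g. \<forall>j. g j \<in> carrier G}" by auto
  qed
qed

lemma classify:
  assumes w: "w \<in> free_words d"
  shows "word_image G d w \<in> {{\<one>}, Z, carrier G}"
proof (cases "\<forall>i. int p dvd esum i w")
  case True then show ?thesis using classify_B[OF w] by auto
next
  case False
  then obtain i where "\<not> int p dvd esum i w" by auto
  then show ?thesis using classify_A[OF w] by auto
qed

end


lemma (in group) main:
  fixes p :: nat
  assumes "Factorial_Ring.prime p" and "extraspecial_p_group p G"
  shows "{word_image G d w | d w. d \<ge> 1 \<and> w \<in> free_words d}
           = {{\<one>}, group_center G, carrier G}"
proof -
  have pr: "Factorial_Ring.prime p" by (rule assms(1))
  have sp: "special_p_group p G" and cZ: "card (group_center G) = p"
    using assms(2) by (auto simp: extraspecial_p_group_def)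
  obtain n where ordG: "order G = p ^ n" using sp by (auto simp: special_p_group_def p_group_def)
  have ZD: "group_center G = derived G (carrier G)" and DF: "derived G (carrier G) = frattini G"
    and ea: "elementary_abelian p G (group_center G)" using sp by (auto simp: special_p_group_def)
  have Zsub: "subgroup (group_center G) G" using ea by (simp add: elementary_abelian_def)
  have X: "xgrp G p (group_center G) n"
  proof (intro xgrp.intro xgrp_axioms.intro)
    show "group G" by (rule group_axioms)
    show "Factorial_Ring.prime p" by (rule pr)
    show "subgroup (group_center G) G" by (rule Zsub)
    show "card (group_center G) = p" by (rule cZ)
    show "order G = p ^ n" by (rule ordG)
  next
    fix z g assume "z \<in> group_center G" "g \<in> carrier G"
    then show "z \<otimes> g = g \<otimes> z" by (auto simp: group_center_def)
  next
    fix a b assume "a \<in> carrier G" "b \<in> carrier G"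
    then show "comm G a b \<in> group_center G" using comm_in_derived ZD by simp
  next
    fix x assume x: "x \<in> carrier G"
    have "x [^] p \<in> frattini G" unfolding frattini_def
    proof (intro CollectI conjI allI impI)
      show "x [^] p \<in> carrier G" using x by simp
      fix M assume M: "maximal_subgroup G M"
      have "derived G (carrier G) \<subseteq> M" using DF M by (auto simp: frattini_def)
      then show "x [^] p \<in> M" using frattini_pow[OF _ M ordG pr x] by simp
    qed
    then show "x [^] p \<in> group_center G" using ZD DF by simp
  qed
  interpret X: xgrp G p "group_center G" n by (rule X)
  have p1: "p > 1" using pr by (simp add: prime_nat_iff)
  show ?thesis
  proof
    show "{word_image G d w | d w. d \<ge> 1 \<and> w \<in> free_words d} \<subseteq> {{\<one>}, group_center G, carrier G}"
    proof
      fix W assume "W \<in> {word_image G d w | d w. d \<ge> 1 \<and> w \<in> free_words d}"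
      then obtain d w where "W = word_image G d w" "w \<in> free_words d" by blast
      then show "W \<in> {{\<one>}, group_center G, carrier G}" using X.classify by simp
    qed
  next
    have one: "word_image G 1 [] = {\<one>}"
    proof -
      have w: "[] \<in> free_words 1" by (simp add: free_words_def)
      have "\<forall>j. (\<lambda>_. \<one>) j \<in> carrier G" by simp
      then show ?thesis unfolding X.image_total[OF w] by auto
    qed
    have car: "word_image G 1 [(0, True)] = carrier G"
    proof -
      have w: "[(0, True)] \<in> free_words 1" by (simp add: free_words_def)
      have "\<not> int p dvd esum 0 [(0, True)]" using p1 by simp
      then show ?thesis using X.classify_A[OF w] by blast
    qed
    define cw :: word where "cw = [(0, False), (1, False), (0, True), (1, True)]"
    have cwf: "cw \<in> free_words 2" by (simp add: free_words_def cw_def)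
    have "\<forall>i. int p dvd esum i cw" by (simp add: cw_def)
    then have cw12: "word_image G 2 cw = {\<one>} \<or> word_image G 2 cw = group_center G"
      using X.classify_B[OF cwf] by blast
    have "\<exists>a\<in>carrier G. \<exists>b\<in>carrier G. comm G a b \<noteq> \<one>"
    proof (rule ccontr)
      assume "\<not> (\<exists>a\<in>carrier G. \<exists>b\<in>carrier G. comm G a b \<noteq> \<one>)"
      then have all: "\<forall>a\<in>carrier G. \<forall>b\<in>carrier G. comm G a b = \<one>" by simp
      have "derived_set G (carrier G) \<subseteq> {\<one>}"
      proof
        fix y assume "y \<in> derived_set G (carrier G)"
        then obtain h1 where h1: "h1 \<in> carrier G"
          and y1: "y \<in> (\<Union>h2\<in>carrier G. {h1 \<otimes> h2 \<otimes> inv h1 \<otimes> inv h2})" by (rule UN_E)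
        from y1 obtain h2 where h2: "h2 \<in> carrier G"
          and "y \<in> {h1 \<otimes> h2 \<otimes> inv h1 \<otimes> inv h2}" by (rule UN_E)
        then have y: "y = h1 \<otimes> h2 \<otimes> inv h1 \<otimes> inv h2" by simp
        have "y = comm G (inv h1) (inv h2)" using h1 h2 y by (simp add: comm_def)
        then show "y \<in> {\<one>}" using all h1 h2 by simp
      qed
      then have "derived G (carrier G) \<subseteq> {\<one>}"
        unfolding derived_def by (rule generate_subgroup_incl[OF _ triv_subgroup])
      then have "group_center G \<subseteq> {\<one>}" using ZD by simp
      then have "card (group_center G) \<le> 1" using card_mono[of "{\<one>}" "group_center G"] by simp
      then show False using cZ p1 by simp
    qed
    then obtain a b where ab: "a \<in> carrier G" "b \<in> carrier G" "comm G a b \<noteq> \<one>" by blast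
    have "word_eval G (\<lambda>j. if j = 0 then a else if j = 1 then b else \<one>) cw = comm G a b"
      using ab by (simp add: cw_def comm_def m_assoc)
    moreover have "\<forall>j. (\<lambda>j. if j = 0 then a else if j = 1 then b else \<one>) j \<in> carrier G" using ab by simp
    ultimately have "comm G a b \<in> word_image G 2 cw" unfolding X.image_total[OF cwf]
      by (intro CollectI exI[where x="\<lambda>j. if j = 0 then a else if j = 1 then b else \<one>"]) simp
    then have cent: "word_image G 2 cw = group_center G" using cw12 ab(3) by auto
    have "word_image G 1 [] \<in> {word_image G d w | d w. d \<ge> 1 \<and> w \<in> free_words d}"
      by (intro CollectI exI[of _ 1] exI[of _ "[]"]) (simp add: free_words_def)
    moreover have "word_image G 1 [(0, True)] \<in> {word_image G d w | d w. d \<ge> 1 \<and> w \<in> free_words d}"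
      by (intro CollectI exI[of _ 1] exI[of _ "[(0, True)]"]) (simp add: free_words_def)
    moreover have "word_image G 2 cw \<in> {word_image G d w | d w. d \<ge> 1 \<and> w \<in> free_words d}"
      using cwf by (intro CollectI exI[of _ 2] exI[of _ cw]) simp
    ultimately show "{{\<one>}, group_center G, carrier G} \<subseteq> {word_image G d w | d w. d \<ge> 1 \<and> w \<in> free_words d}"
      using one car cent by auto
  qed
qed

theorem theorem4p9:
  fixes G :: "('a, 'b) monoid_scheme" and p :: nat
  assumes "Factorial_Ring.prime p" and "group G" and "extraspecial_p_group p G"
  shows "{word_image G d w | d w. d \<ge> 1 \<and> w \<in> free_words d}
           = {{\<one>\<^bsub>G\<^esub>}, group_center G, carrier G}"
  using group.main[OF assms(2) assms(1) assms(3)] .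


end
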